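(* Let $L\in\mathbb{R}^{N\times N}$ be a nonnegative liabilities matrix, let $\mathbf{e}\in\mathbb{R}^N_{\ge 0}$ be the cash-on-hand vector, and let $C\ge 0$ be a given total cash injection amount. Assume the network is such that for every cash injection vector $\mathbf{c}\ge\mathbf{0}$ the clearing payment vector $\mathbf{p}(\mathbf{c})$ exists and is unique. Then the problem \[ \text{minimize } D=\mathbf{1}^T(\bar{\mathbf p}-\mathbf p(\mathbf c)) \text{ over } \mathbf c\ge \mathbf 0 \text{ with } \mathbf 1^T\mathbf c=C \] has a solution, and one is obtained by solving the linear program \[ \text{maximize } \mathbf 1^T\mathbf p \text{ over } (\mathbf c,\mathbf p)\in\mathbb R^{2N} \] subject to $\mathbf 1^T\mathbf c=C$, $\mathbf c\ge\mathbf 0$, $\mathbf 0\le\mathbf p\le\bar{\mathbf p}$, $\mathbf p\le\Pi^T\mathbf p+\mathbf e+\mathbf c$: namely, if $(\mathbf p^*,\mathbf c^* )$ is an optimal solution of this linear program, then $\mathbf c^*$ attains the minimum of $D$ over all allocations $\mathbf c\ge\mathbf 0$ with $\mathbf 1^T\mathbf c=C$ (and $\mathbf p^*=\mathbf p(\mathbf c^* )$).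
   Context: Financial network model: $N$ nodes; $L_{ij}\ge 0$ is the amount node $i$ owes node $j$, all due at a single date. All vector inequalities are componentwise; $\mathbf 0,\mathbf 1$ are the all-zeros and all-ones vectors in $\mathbb R^N$. $\bar p_i=\sum_j L_{ij}$ is the total amount node $i$ owes. $\Pi_{ij}=L_{ij}/\bar p_i$ if $\bar p_i\neq 0$ and $\Pi_{ij}=0$ otherwise; $\Pi$ is the matrix with entries $\Pi_{ij}$. $\mathbf e\ge\mathbf 0$ is cash on hand and $\mathbf c\ge\mathbf 0$ is external cash injection. Given a payment vector $\mathbf p$ ($p_i$ = total amount node $i$ actually pays its creditors), node $i$ receives $q_i=\sum_j \Pi_{ji}p_j$ and has total funds $r_i=q_i+e_i+c_i$. A clearing payment vector for given $L,\mathbf e,\mathbf c$ is a vector $\mathbf p$ with $p_i=\min(\bar p_i, r_i)$ for every $i$, i.e. $\mathbf p=\min(\bar{\mathbf p},\Pi^T\mathbf p+\mathbf e+\mathbf c)$ componentwise (a node pays its liabilities in full if its funds suffice, otherwise pays all of its funds, distributed to creditors in proportion to the amounts owed). $D=\mathbf 1^T(\bar{\mathbf p}-\mathbf p)$ is the total unpaid liabilities. *)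

theory Defs
  imports "HOL-Analysis.Analysis"
begin

text \<open>Financial network with node index type 'n (finite). L $ i $ j = amount node i owes node j.\<close>

definition pbar :: "real^'n^'n \<Rightarrow> real^'n::finite" where
  "pbar L = (\<chi> i. \<Sum>j\<in>UNIV. L $ i $ j)"

definition relmat :: "real^'n^'n \<Rightarrow> real^'n^'n::finite" where
  "relmat L = (\<chi> i j. if pbar L $ i \<noteq> 0 then L $ i $ j / pbar L $ i else 0)"

definition is_clearing :: "real^'n^'n \<Rightarrow> real^'n \<Rightarrow> real^'n \<Rightarrow> real^'n::finite \<Rightarrow> bool" where
  "is_clearing L e c p \<longleftrightarrow>
     (\<forall>i. p $ i = min (pbar L $ i) ((\<Sum>j\<in>UNIV. relmat L $ j $ i * p $ j) + e $ i + c $ i))"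

text \<open>The (unique, when it exists uniquely) clearing vector p(c).\<close>
definition clearing_vec :: "real^'n^'n \<Rightarrow> real^'n \<Rightarrow> real^'n \<Rightarrow> real^'n::finite" where
  "clearing_vec L e c = (THE p. is_clearing L e c p)"

definition unpaid :: "real^'n^'n \<Rightarrow> real^'n \<Rightarrow> real^'n::finite \<Rightarrow> real" where
  "unpaid L e c = (\<Sum>i\<in>UNIV. pbar L $ i - clearing_vec L e c $ i)"

definition admissible :: "real \<Rightarrow> real^'n::finite \<Rightarrow> bool" where
  "admissible C c \<longleftrightarrow> (\<forall>i. 0 \<le> c $ i) \<and> (\<Sum>i\<in>UNIV. c $ i) = C"

definition lp_feasible :: "real^'n^'n \<Rightarrow> real^'n \<Rightarrow> real \<Rightarrow> real^'n \<Rightarrow> real^'n::finite \<Rightarrow> bool" where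
  "lp_feasible L e C c p \<longleftrightarrow> admissible C c \<and>
     (\<forall>i. 0 \<le> p $ i \<and> p $ i \<le> pbar L $ i \<and>
          p $ i \<le> (\<Sum>j\<in>UNIV. relmat L $ j $ i * p $ j) + e $ i + c $ i)"

definition lp_optimal :: "real^'n^'n \<Rightarrow> real^'n \<Rightarrow> real \<Rightarrow> real^'n \<Rightarrow> real^'n::finite \<Rightarrow> bool" where
  "lp_optimal L e C c p \<longleftrightarrow> lp_feasible L e C c p \<and>
     (\<forall>c' p'. lp_feasible L e C c' p' \<longrightarrow> (\<Sum>i\<in>UNIV. p' $ i) \<le> (\<Sum>i\<in>UNIV. p $ i))"

end

theory Submission
  imports Defs
begin

lemma pbar_nonneg: "\<forall>i j. 0 \<le> L $ i $ j \<Longrightarrow> 0 \<le> pbar L $ i"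
  unfolding pbar_def by (simp add: sum_nonneg)

lemma relmat_nonneg: "\<forall>i j. 0 \<le> L $ i $ j \<Longrightarrow> 0 \<le> relmat L $ j $ i"
  unfolding relmat_def using pbar_nonneg[of L j] by simp

lemma gfp_exists:
  fixes L :: "real^'n::finite^'n" and e c :: "real^'n"
  assumes Ln: "\<forall>i j. 0 \<le> L $ i $ j" and en: "\<forall>i. 0 \<le> e $ i" and cn: "\<forall>i. 0 \<le> c $ i"
  shows "\<exists>q. is_clearing L e c q \<and> (\<forall>i. 0 \<le> q$i \<and> q$i \<le> pbar L $ i) \<and>
     (\<forall>p. (\<forall>i. 0 \<le> p$i \<and> p$i \<le> pbar L $ i \<and>
          p$i \<le> (\<Sum>j\<in>UNIV. relmat L $ j $ i * p $ j) + e $ i + c $ i) \<longrightarrow> (\<forall>i. p$i \<le> q$i))"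
proof -
  define F where "F p i = (\<Sum>j\<in>UNIV. relmat L $ j $ i * p $ j) + e$i + c$i" for p :: "real^'n" and i
  have mono: "F p i \<le> F p' i" if "\<forall>i. p$i \<le> p'$i" for p p' i
    unfolding F_def using that relmat_nonneg[OF Ln]
    by (simp add: sum_mono mult_left_mono)
  have Fnn: "0 \<le> F p i" if "\<forall>i. 0 \<le> p$i" for p i
    unfolding F_def using that relmat_nonneg[OF Ln] en cn
    by (simp add: sum_nonneg add_nonneg_nonneg)
  define S where "S = {p. \<forall>i. 0 \<le> p$i \<and> p$i \<le> pbar L$i \<and> p$i \<le> F p i}"
  define q where "q = (\<chi> i. Sup ((\<lambda>p. p$i) ` S))"
  have z: "0 \<in> S" unfolding S_def using pbar_nonneg[OF Ln] Fnn[of 0] by simp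
  have bdd: "bdd_above ((\<lambda>p. p$i) ` S)" for i
    by (rule bdd_aboveI[where M="pbar L $ i"]) (auto simp: S_def)
  have up: "p$i \<le> q$i" if "p \<in> S" for p i
    unfolding q_def using cSup_upper[OF _ bdd] that by simp
  have qle: "q$i \<le> pbar L $ i" for i
    unfolding q_def vec_lambda_beta apply (rule cSup_least) using z apply blast
    apply (auto simp: S_def) done
  have qnn: "0 \<le> q$i" for i using up[OF z] by simp
  have qF: "q$i \<le> F q i" for i
  proof -
    have "p$i \<le> F q i" if "p \<in> S" for p
    proof -
      have a: "p$i \<le> F p i" using that unfolding S_def by simp
      have "F p i \<le> F q i" using mono up[OF that] by blast
      then show ?thesis using a by linarith
    qed
    then show ?thesis unfolding q_def vec_lambda_beta by (intro cSup_least) (use z in auto)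
  qed
  define r where "r = (\<chi> i. min (pbar L $ i) (F q i))"
  have qr: "q$i \<le> r$i" for i unfolding r_def using qle qF by simp
  have "r \<in> S" unfolding S_def r_def
    using pbar_nonneg[OF Ln] Fnn[of q] qnn mono[of q r] qr
    by (auto simp: r_def min_le_iff_disj)
  hence "r$i \<le> q$i" for i using up by blast
  hence qeq: "q$i = min (pbar L $ i) (F q i)" for i using qr[of i] unfolding r_def
    by (metis order_antisym vec_lambda_beta)
  show ?thesis
  proof (intro exI[of _ q] conjI allI impI)
    show "is_clearing L e c q" unfolding is_clearing_def using qeq unfolding F_def by blast
    show "0 \<le> q$i" for i using qnn by simp
    show "q$i \<le> pbar L $ i" for i using qle by simp
    fix p i assume "\<forall>i. 0 \<le> p$i \<and> p$i \<le> pbar L $ i \<and>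
          p$i \<le> (\<Sum>j\<in>UNIV. relmat L $ j $ i * p $ j) + e $ i + c $ i"
    hence "p \<in> S" unfolding S_def F_def by simp
    thus "p$i \<le> q$i" using up by blast
  qed
qed

lemma cv:
  fixes L :: "real^'n::finite^'n" and e c :: "real^'n"
  assumes Ln: "\<forall>i j. 0 \<le> L $ i $ j" and en: "\<forall>i. 0 \<le> e $ i" and cn: "\<forall>i. 0 \<le> c $ i"
    and uniq: "\<forall>c::real^'n. (\<forall>i. 0 \<le> c $ i) \<longrightarrow> (\<exists>!p. is_clearing L e c p)"
  shows "is_clearing L e c (clearing_vec L e c) \<and>
     (\<forall>i. 0 \<le> clearing_vec L e c $i \<and> clearing_vec L e c $i \<le> pbar L $ i) \<and>
     (\<forall>p. (\<forall>i. 0 \<le> p$i \<and> p$i \<le> pbar L $ i \<and>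
          p$i \<le> (\<Sum>j\<in>UNIV. relmat L $ j $ i * p $ j) + e $ i + c $ i) \<longrightarrow> (\<forall>i. p$i \<le> clearing_vec L e c $i))"
proof -
  obtain q where q: "is_clearing L e c q \<and> (\<forall>i. 0 \<le> q$i \<and> q$i \<le> pbar L $ i) \<and>
     (\<forall>p. (\<forall>i. 0 \<le> p$i \<and> p$i \<le> pbar L $ i \<and>
          p$i \<le> (\<Sum>j\<in>UNIV. relmat L $ j $ i * p $ j) + e $ i + c $ i) \<longrightarrow> (\<forall>i. p$i \<le> q$i))"
    using gfp_exists[OF Ln en cn] by (rule exE)
  have u: "\<exists>!p. is_clearing L e c p" using uniq cn by blast
  have "clearing_vec L e c = q" unfolding clearing_vec_def
    by (rule the1_equality[OF u]) (use q in \<open>rule conjunct1\<close>)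
  then show ?thesis using q by simp
qed

theorem theorem1:
  fixes L :: "real^'n::finite^'n" and e :: "real^'n" and C :: real
  assumes L_nonneg: "\<forall>i j. 0 \<le> L $ i $ j"
    and e_nonneg: "\<forall>i. 0 \<le> e $ i"
    and C_nonneg: "0 \<le> C"
    and uniq: "\<forall>c::real^'n. (\<forall>i. 0 \<le> c $ i) \<longrightarrow> (\<exists>!p. is_clearing L e c p)"
  shows "(\<exists>c. admissible C c \<and> (\<forall>c'. admissible C c' \<longrightarrow> unpaid L e c \<le> unpaid L e c'))
    \<and> (\<exists>c p. lp_optimal L e C c p)
    \<and> (\<forall>c p. lp_optimal L e C c p \<longrightarrow>
          admissible C c
          \<and> (\<forall>c'. admissible C c' \<longrightarrow> unpaid L e c \<le> unpaid L e c')
          \<and> p = clearing_vec L e c)"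
proof -
  have feas_cv: "lp_feasible L e C c (clearing_vec L e c)" if "admissible C c" for c
  proof -
    have cn: "\<forall>i. 0 \<le> c $ i" using that admissible_def by blast
    note h = cv[OF L_nonneg e_nonneg cn uniq]
    show ?thesis unfolding lp_feasible_def
    proof (intro conjI allI)
      show "admissible C c" using that .
      fix i
      have eq: "clearing_vec L e c $ i = min (pbar L $ i)
        ((\<Sum>j\<in>UNIV. relmat L $ j $ i * clearing_vec L e c $ j) + e $ i + c $ i)"
        using h unfolding is_clearing_def by blast
      show "0 \<le> clearing_vec L e c $ i" using h by blast
      show "clearing_vec L e c $ i \<le> pbar L $ i" using h by blast
      show "clearing_vec L e c $ i \<le> (\<Sum>j\<in>UNIV. relmat L $ j $ i * clearing_vec L e c $ j) + e $ i + c $ i"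
        using eq min.cobounded2 by (rule ord_eq_le_trans)
    qed
  qed
  have le_cv: "p$i \<le> clearing_vec L e c $ i" if "lp_feasible L e C c p" for c p i
  proof -
    have cn: "\<forall>i. 0 \<le> c $ i" using that lp_feasible_def admissible_def by blast
    note h = cv[OF L_nonneg e_nonneg cn uniq]
    show ?thesis using h that unfolding lp_feasible_def by blast
  qed
  have unp: "unpaid L e c = (\<Sum>i\<in>UNIV. pbar L $ i) - (\<Sum>i\<in>UNIV. clearing_vec L e c $ i)" for c
    unfolding unpaid_def by (simp add: sum_subtractf)
  have third: "\<forall>c p. lp_optimal L e C c p \<longrightarrow>
          admissible C c
          \<and> (\<forall>c'. admissible C c' \<longrightarrow> unpaid L e c \<le> unpaid L e c')
          \<and> p = clearing_vec L e c"
  proof (intro allI impI)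
    fix c p assume opt: "lp_optimal L e C c p"
    have fe: "lp_feasible L e C c p" using opt lp_optimal_def by blast
    have ad: "admissible C c" using fe lp_feasible_def by blast
    have le: "\<forall>i. p$i \<le> clearing_vec L e c $ i" using le_cv[OF fe] by blast
    have "(\<Sum>i\<in>UNIV. clearing_vec L e c $ i) \<le> (\<Sum>i\<in>UNIV. p $ i)"
      using opt feas_cv[OF ad] unfolding lp_optimal_def by blast
    hence "(\<Sum>i\<in>UNIV. clearing_vec L e c $ i - p $ i) = 0"
      using le sum_mono[of UNIV "\<lambda>i. p$i" "\<lambda>i. clearing_vec L e c $ i"]
      by (simp add: sum_subtractf)
    hence "\<forall>i. clearing_vec L e c $ i - p $ i = 0"
      using le by (subst (asm) sum_nonneg_eq_0_iff) auto
    hence peq: "p = clearing_vec L e c" by (simp add: vec_eq_iff)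
    have "\<forall>c'. admissible C c' \<longrightarrow> unpaid L e c \<le> unpaid L e c'"
    proof (intro allI impI)
      fix c' :: "real^'n" assume "admissible C c'"
      then have "(\<Sum>i\<in>UNIV. clearing_vec L e c' $ i) \<le> (\<Sum>i\<in>UNIV. p $ i)"
        using opt feas_cv unfolding lp_optimal_def by blast
      then show "unpaid L e c \<le> unpaid L e c'" unfolding unp peq by simp
    qed
    then show "admissible C c
          \<and> (\<forall>c'. admissible C c' \<longrightarrow> unpaid L e c \<le> unpaid L e c')
          \<and> p = clearing_vec L e c" using ad peq by blast
  qed
  define S where "S = {x :: (real^'n) \<times> (real^'n). lp_feasible L e C (fst x) (snd x)}"
  obtain i0 :: 'n where True by blast
  define c0 :: "real^'n" where "c0 = (\<chi> i. if i = i0 then C else 0)"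
  have ad0: "admissible C c0" unfolding admissible_def c0_def using C_nonneg
    by (simp add: if_distrib sum.delta cong: if_cong)
  have "(c0, 0) \<in> S" unfolding S_def lp_feasible_def using ad0 pbar_nonneg[OF L_nonneg] e_nonneg
    by (auto simp: admissible_def add_nonneg_nonneg)
  hence ne: "S \<noteq> {}" by blast
  have bnd: "bounded S"
  proof (rule bounded_subset)
    show "bounded (cbox 0 (\<chi> i. C) \<times> cbox 0 (pbar L))"
      by (intro bounded_Times bounded_cbox)
    show "S \<subseteq> cbox 0 (\<chi> i. C) \<times> cbox 0 (pbar L)"
    proof
      fix x assume "x \<in> S"
      then have f: "lp_feasible L e C (fst x) (snd x)" unfolding S_def by simp
      have "fst x $ i \<le> C" for i
      proof -
        have "fst x $ i \<le> (\<Sum>j\<in>UNIV. fst x $ j)"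
          using f unfolding lp_feasible_def admissible_def
          by (intro member_le_sum) auto
        then show ?thesis using f unfolding lp_feasible_def admissible_def by simp
      qed
      then show "x \<in> cbox 0 (\<chi> i. C) \<times> cbox 0 (pbar L)"
        using f unfolding lp_feasible_def admissible_def
        by (cases x) (auto simp: mem_box_cart)
    qed
  qed
  have cl: "closed S"
  proof -
    have "S = {x. (\<Sum>i\<in>UNIV. fst x $ i) = C} \<inter>
       (\<Inter>i. {x. 0 \<le> fst x $ i} \<inter> {x. 0 \<le> snd x $ i} \<inter> {x. snd x $ i \<le> pbar L $ i}
         \<inter> {x. snd x $ i \<le> (\<Sum>j\<in>UNIV. relmat L $ j $ i * snd x $ j) + e $ i + fst x $ i})"
      unfolding S_def lp_feasible_def admissible_def by auto
    also have "closed \<dots>"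
      by (intro closed_Int closed_INT closed_Collect_eq closed_Collect_le
          continuous_intros ballI)
    finally show ?thesis .
  qed
  have "\<exists>x\<in>S. \<forall>y\<in>S. (\<lambda>x. \<Sum>i\<in>UNIV. snd x $ i) y \<le> (\<lambda>x. \<Sum>i\<in>UNIV. snd x $ i) x"
    by (rule continuous_attains_sup[OF compact_eq_bounded_closed[THEN iffD2] ne])
       (use bnd cl in auto, intro continuous_intros)
  then obtain x where "x \<in> S" "\<forall>y\<in>S. (\<Sum>i\<in>UNIV. snd y $ i) \<le> (\<Sum>i\<in>UNIV. snd x $ i)" by blast
  hence opt: "lp_optimal L e C (fst x) (snd x)"
    unfolding lp_optimal_def S_def by auto
  show ?thesis using third opt by blast
qed

end
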